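(* For $n\ge2$, $c_n=|\mathcal C_n(321)|\ge |S_{n-1}(132,231)|=2^{n-2}$.
   Context: A permutation $\pi=\pi_1\cdots\pi_n$ (one-line notation) contains a classical pattern $p\in S_k$ if some subsequence $\pi_{t_1}\cdots\pi_{t_k}$ ($t_1<\dots<t_k$) is order-isomorphic to $p$; otherwise it avoids $p$. $S_m(132,231)$ is the set of permutations of $[m]$ avoiding both $132$ and $231$. $\mathcal C_n$ is the set of cyclic permutations of $[n]$ (a single $n$-cycle), $\mathcal C_n(321)$ those avoiding $321$, and $c_n=|\mathcal C_n(321)|$. *)

theory Defs
  imports "HOL-Combinatorics.Multiset_Permutations" "HOL-Library.Sublist"
begin

text \<open>Permutations of [m] = {1..m} in one-line notation, as lists.\<close>
definition perms :: "nat \<Rightarrow> nat list set" where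
  "perms m = permutations_of_set {1..m}"

definition contains :: "nat list \<Rightarrow> nat list \<Rightarrow> bool" where
  "contains \<pi> p \<longleftrightarrow> (\<exists>ys. subseq ys \<pi> \<and> length ys = length p \<and>
      (\<forall>i<length p. \<forall>j<length p. (ys ! i < ys ! j \<longleftrightarrow> p ! i < p ! j)))"

definition avoids :: "nat list \<Rightarrow> nat list \<Rightarrow> bool" where
  "avoids \<pi> p \<longleftrightarrow> \<not> contains \<pi> p"

definition perm_fun :: "nat list \<Rightarrow> nat \<Rightarrow> nat" where
  "perm_fun \<pi> i = \<pi> ! (i - 1)"

text \<open>Cyclic permutations of [n]: a single n-cycle, i.e. the orbit of 1 is all of [n].\<close>
definition cyclic_perms :: "nat \<Rightarrow> nat list set" where
  "cyclic_perms n = {\<pi> \<in> perms n. \<forall>i\<in>{1..n}. \<exists>k. (perm_fun \<pi> ^^ k) 1 = i}"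

end

theory Submission imports Defs begin

lemma all3: "(\<forall>i<Suc (Suc (Suc 0)). P (i::nat)) \<longleftrightarrow> P 0 \<and> P (Suc 0) \<and> P (Suc (Suc 0))"
  by (auto simp: less_Suc_eq)

lemma contains3:
  "contains \<pi> [p,q,r] \<longleftrightarrow> (\<exists>a b c. subseq [a,b,c] \<pi> \<and>
     (a < b \<longleftrightarrow> p < q) \<and> (b < a \<longleftrightarrow> q < p) \<and> (a < c \<longleftrightarrow> p < r) \<and> (c < a \<longleftrightarrow> r < p)
     \<and> (b < c \<longleftrightarrow> q < r) \<and> (c < b \<longleftrightarrow> r < q))"
proof
  assume "contains \<pi> [p,q,r]"
  then obtain ys where ys: "subseq ys \<pi>" "length ys = 3"
    "\<forall>i<3. \<forall>j<3. (ys ! i < ys ! j \<longleftrightarrow> [p,q,r] ! i < [p,q,r] ! j)"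
    unfolding contains_def by auto
  then obtain a b c where "ys = [a,b,c]"
    by (auto simp: numeral_3_eq_3 length_Suc_conv)
  with ys show "\<exists>a b c. subseq [a,b,c] \<pi> \<and>
     (a < b \<longleftrightarrow> p < q) \<and> (b < a \<longleftrightarrow> q < p) \<and> (a < c \<longleftrightarrow> p < r) \<and> (c < a \<longleftrightarrow> r < p)
     \<and> (b < c \<longleftrightarrow> q < r) \<and> (c < b \<longleftrightarrow> r < q)"
    by (auto simp: numeral_3_eq_3 all3)
next
  assume "\<exists>a b c. subseq [a,b,c] \<pi> \<and>
     (a < b \<longleftrightarrow> p < q) \<and> (b < a \<longleftrightarrow> q < p) \<and> (a < c \<longleftrightarrow> p < r) \<and> (c < a \<longleftrightarrow> r < p)
     \<and> (b < c \<longleftrightarrow> q < r) \<and> (c < b \<longleftrightarrow> r < q)"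
  then obtain a b c where h: "subseq [a,b,c] \<pi>" 
     "(a < b \<longleftrightarrow> p < q)" "(b < a \<longleftrightarrow> q < p)" "(a < c \<longleftrightarrow> p < r)" "(c < a \<longleftrightarrow> r < p)"
     "(b < c \<longleftrightarrow> q < r)" "(c < b \<longleftrightarrow> r < q)" by blast
  show "contains \<pi> [p,q,r]" unfolding contains_def
    by (rule exI[of _ "[a,b,c]"]) (use h in \<open>auto simp: numeral_3_eq_3 all3\<close>)
qed

lemma c321: "contains \<pi> [3,2,1] \<longleftrightarrow> (\<exists>a b c. subseq [a,b,c] \<pi> \<and> b < a \<and> c < b)"
  unfolding contains3
  apply (rule iffI)
   apply (elim exE conjE) apply (simp; blast)
  apply (elim exE conjE)
  subgoal for a b c by (rule exI[of _ a], rule exI[of _ b], rule exI[of _ c]) simp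
  done
lemma c132: "contains \<pi> [1,3,2] \<longleftrightarrow> (\<exists>a b c. subseq [a,b,c] \<pi> \<and> a < c \<and> c < b)"
  unfolding contains3
  apply (rule iffI)
   apply (elim exE conjE) apply (simp; blast)
  apply (elim exE conjE)
  subgoal for a b c by (rule exI[of _ a], rule exI[of _ b], rule exI[of _ c]) simp
  done
lemma c231: "contains \<pi> [2,3,1] \<longleftrightarrow> (\<exists>a b c. subseq [a,b,c] \<pi> \<and> c < a \<and> a < b)"
  unfolding contains3
  apply (rule iffI)
   apply (elim exE conjE) apply (simp; blast)
  apply (elim exE conjE)
  subgoal for a b c by (rule exI[of _ a], rule exI[of _ b], rule exI[of _ c]) simp
  done

lemma subseq_map_inv: "subseq ys (map f xs) \<Longrightarrow> \<exists>zs. subseq zs xs \<and> ys = map f zs"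
proof (induction xs arbitrary: ys)
  case Nil then show ?case by auto
next
  case (Cons x xs)
  show ?case
  proof (cases ys)
    case Nil then show ?thesis by auto
  next
    case (Cons y ys')
    show ?thesis
    proof (cases "y = f x")
      case True
      with Cons \<open>subseq ys (map f (x # xs))\<close> have "subseq ys' (map f xs)" by auto
      then obtain zs where "subseq zs xs" "ys' = map f zs" using Cons.IH by blast
      then show ?thesis using Cons True by (intro exI[of _ "x#zs"]) auto
    next
      case False
      with Cons \<open>subseq ys (map f (x # xs))\<close> have "subseq ys (map f xs)" by auto
      then obtain zs where "subseq zs xs" "ys = map f zs" using Cons.IH by blast
      then show ?thesis by (intro exI[of _ zs]) auto
    qed
  qed
qed


definition peakfree :: "nat list \<Rightarrow> bool" where
  "peakfree \<pi> \<longleftrightarrow> \<not>(\<exists>a b c. subseq [a,b,c] \<pi> \<and> a < b \<and> c < b)"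

lemma subseq_distinct: "subseq xs ys \<Longrightarrow> distinct ys \<Longrightarrow> distinct xs"
  by (induction rule: list_emb.induct) (auto dest: list_emb_set)

lemma Sav_peak: "distinct \<pi> \<Longrightarrow> (avoids \<pi> [1,3,2] \<and> avoids \<pi> [2,3,1]) \<longleftrightarrow> peakfree \<pi>"
  unfolding avoids_def c132 c231 peakfree_def
proof (intro iffI)
  assume d: "distinct \<pi>" and h: "\<not> (\<exists>a b c. subseq [a, b, c] \<pi> \<and> a < c \<and> c < b) \<and> \<not> (\<exists>a b c. subseq [a, b, c] \<pi> \<and> c < a \<and> a < b)"
  show "\<not> (\<exists>a b c. subseq [a, b, c] \<pi> \<and> a < b \<and> c < b)"
  proof
    assume "\<exists>a b c. subseq [a, b, c] \<pi> \<and> a < b \<and> c < b"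
    then obtain a b c where s: "subseq [a, b, c] \<pi>" "a < b" "c < b" by blast
    have "a \<noteq> c" using subseq_distinct[OF s(1) d] by auto
    then show False using h s by (metis linorder_neqE_nat)
  qed
qed (meson less_trans)+

lemma peakD: "\<not>(\<exists>a b c. subseq [a,b,c] xs \<and> a<b \<and> c<b) \<Longrightarrow> subseq [a,b,c] xs \<Longrightarrow> a<b \<Longrightarrow> c<b \<Longrightarrow> False"
  by blast

lemma subseq_set: "subseq xs ys \<Longrightarrow> set xs \<subseteq> set ys"
  by (induction rule: list_emb.induct) auto

lemma perms_Cons: "xs \<in> perms m \<Longrightarrow> Suc m # xs \<in> perms (Suc m)"
  unfolding perms_def permutations_of_set_def by auto

lemma perms_snoc: "xs \<in> perms m \<Longrightarrow> xs @ [Suc m] \<in> perms (Suc m)"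
  unfolding perms_def permutations_of_set_def by auto

lemma perms_set: "xs \<in> perms m \<Longrightarrow> set xs = {1..m}"
  unfolding perms_def permutations_of_set_def by auto
lemma perms_distinct: "xs \<in> perms m \<Longrightarrow> distinct xs"
  unfolding perms_def permutations_of_set_def by auto
lemma perms_length: "xs \<in> perms m \<Longrightarrow> length xs = m"
proof -
  assume a: "xs \<in> perms m"
  have "length xs = card (set xs)" using distinct_card[OF perms_distinct[OF a]] by simp
  then show ?thesis using perms_set[OF a] by simp
qed

lemma peak_Cons: "xs \<in> perms m \<Longrightarrow> peakfree xs \<Longrightarrow> peakfree (Suc m # xs)"
  unfolding peakfree_def
proof (clarify)
  fix a b c assume xs: "xs \<in> perms m" "\<not> (\<exists>a b c. subseq [a, b, c] xs \<and> a < b \<and> c < b)"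
    and s: "subseq [a, b, c] (Suc m # xs)" "a < b" "c < b"
  show False
  proof (cases "a = Suc m")
    case True
    then have "subseq [b,c] xs" using s(1) by simp
    then have "b \<in> set xs" using subseq_set by force
    then show False using True s perms_set[OF xs(1)] by auto
  next
    case False
    then have "subseq [a,b,c] xs" using s(1) by auto
    then show False using xs s by blast
  qed
qed

lemma subseq_single_right: "subseq ys [x] \<longleftrightarrow> ys = [] \<or> ys = [x]"
  by (cases ys) auto

lemma peak_snoc: "xs \<in> perms m \<Longrightarrow> peakfree xs \<Longrightarrow> peakfree (xs @ [Suc m])"
  unfolding peakfree_def
proof (clarify)
  fix a b c assume xs: "xs \<in> perms m" "\<not> (\<exists>a b c. subseq [a, b, c] xs \<and> a < b \<and> c < b)"
    and s: "subseq [a, b, c] (xs @ [Suc m])" "a < b" "c < b"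
  obtain l1 l2 where l: "[a,b,c] = l1 @ l2" "subseq l1 xs" "subseq l2 [Suc m]"
    using subseq_appendE[OF s(1)] by blast
  show False
  proof (cases "l2 = []")
    case True
    then have "subseq [a,b,c] xs" using l by simp
    then show False by (rule peakD[OF xs(2) _ s(2) s(3)])
  next
    case False
    then have "l2 = [Suc m]" using subseq_single_right[of l2 "Suc m"] l(3) by blast
    then have "l1 = [a,b]" "c = Suc m" using l(1) by auto
    then have "b \<in> set xs" using l(2) subseq_set by force
    then show False using s perms_set[OF xs(1)] \<open>c = Suc m\<close> by auto
  qed
qed

definition Sav :: "nat \<Rightarrow> nat list set" where
  "Sav m = {\<pi> \<in> perms m. peakfree \<pi>}"

lemma set_remove: "insert x A = B \<Longrightarrow> x \<notin> A \<Longrightarrow> A = B - {x}"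
  by auto

lemma Sav_step: assumes "m \<ge> 1"
  shows "Sav (Suc m) = Cons (Suc m) ` Sav m \<union> (\<lambda>xs. xs @ [Suc m]) ` Sav m"
proof
  show "Cons (Suc m) ` Sav m \<union> (\<lambda>xs. xs @ [Suc m]) ` Sav m \<subseteq> Sav (Suc m)"
    unfolding Sav_def using perms_Cons perms_snoc peak_Cons peak_snoc by blast
next
  show "Sav (Suc m) \<subseteq> Cons (Suc m) ` Sav m \<union> (\<lambda>xs. xs @ [Suc m]) ` Sav m"
  proof
    fix \<pi> assume "\<pi> \<in> Sav (Suc m)"
    then have p: "\<pi> \<in> perms (Suc m)" and pk: "peakfree \<pi>" unfolding Sav_def by auto
    have st: "set \<pi> = {1..Suc m}" using perms_set[OF p] .
    have d: "distinct \<pi>" using perms_distinct[OF p] .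
    have "Suc m \<in> set \<pi>" using st by simp
    then obtain p q where pq: "\<pi> = p @ Suc m # q" by (meson split_list)
    have dd: "{1..Suc m} - {Suc m} = {1..m}" by auto
    show "\<pi> \<in> Cons (Suc m) ` Sav m \<union> (\<lambda>xs. xs @ [Suc m]) ` Sav m"
    proof (cases "p = []")
      case True
      then have pq': "\<pi> = Suc m # q" using pq by simp
      have "set q = {1..m}"
        using set_remove[of "Suc m" "set q" "{1..Suc m}"] st d dd unfolding pq' by simp
      then have "q \<in> perms m" unfolding perms_def permutations_of_set_def
        using d pq' by simp
      moreover have "peakfree q"
        unfolding peakfree_def
      proof clarify
        fix a b c assume "subseq [a,b,c] q" "a < b" "c < b"
        then show False using pk unfolding peakfree_def pq' by (meson list_emb.list_emb_Cons)
      qed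
      ultimately show ?thesis using pq' unfolding Sav_def by blast
    next
      case False
      show ?thesis
      proof (cases "q = []")
        case True
        then have pq': "\<pi> = p @ [Suc m]" using pq by simp
        have "set p = {1..m}"
          using set_remove[of "Suc m" "set p" "{1..Suc m}"] st d dd unfolding pq' by simp
        then have "p \<in> perms m" unfolding perms_def permutations_of_set_def
          using d pq' by simp
        moreover have "peakfree p"
          unfolding peakfree_def
        proof clarify
          fix a b c assume "subseq [a,b,c] p" "a < b" "c < b"
          then show False using pk unfolding peakfree_def pq' by (meson subseq_rev_drop_many)
        qed
        ultimately show ?thesis using pq' unfolding Sav_def by blast
      next
        case False2: False
        obtain a where a: "a \<in> set p" using False by (cases p) auto
        obtain c where c: "c \<in> set q" using False2 by (cases q) auto
        have "subseq [a] p" using a by (simp add: subseq_singleton_left)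
        moreover have "subseq [Suc m, c] (Suc m # q)" using c by (simp add: subseq_singleton_left)
        ultimately have sub: "subseq ([a] @ [Suc m, c]) \<pi>" unfolding pq by (rule list_emb_append_mono)
        have "a \<in> set \<pi>" "c \<in> set \<pi>" using a c pq by auto
        then have "a \<le> Suc m" "c \<le> Suc m" using st by auto
        moreover have "a \<noteq> Suc m" "c \<noteq> Suc m" using a c d pq by auto
        ultimately have "a < Suc m" "c < Suc m" by auto
        then show ?thesis using pk sub unfolding peakfree_def by auto
      qed
    qed
  qed
qed

lemma card_Sav: "card (Sav (Suc j)) = 2 ^ j"
proof (induction j)
  case 0
  have "perms 1 = {[1]}" unfolding perms_def by simp
  moreover have "peakfree [1]" unfolding peakfree_def by auto
  ultimately have "Sav 1 = {[1]}" unfolding Sav_def by auto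
  then show ?case by simp
next
  case (Suc j)
  have fin: "finite (Sav (Suc j))" unfolding Sav_def perms_def by simp
  have disj: "Cons (Suc (Suc j)) ` Sav (Suc j) \<inter> (\<lambda>xs. xs @ [Suc (Suc j)]) ` Sav (Suc j) = {}"
  proof (rule ccontr)
    assume "\<not> ?thesis"
    then obtain xs ys where xy: "xs \<in> Sav (Suc j)" "ys \<in> Sav (Suc j)" "Suc (Suc j) # xs = ys @ [Suc (Suc j)]"
      by auto
    have "length xs = Suc j" using xy(1) perms_length unfolding Sav_def by auto
    then have "xs \<noteq> []" by auto
    then have "Suc (Suc j) \<in> set xs" using xy(3)
      by (metis last_ConsR last_in_set last_snoc)
    then show False using xy(1) perms_set unfolding Sav_def by fastforce
  qed
  have "card (Sav (Suc (Suc j))) = card (Cons (Suc (Suc j)) ` Sav (Suc j)) + card ((\<lambda>xs. xs @ [Suc (Suc j)]) ` Sav (Suc j))"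
    unfolding Sav_step[of "Suc j", simplified] using fin disj by (simp add: card_Un_disjoint)
  also have "\<dots> = 2 * card (Sav (Suc j))"
    by (simp add: card_image inj_on_def)
  finally show ?case using Suc by simp
qed


definition nop321 :: "nat list \<Rightarrow> bool" where
  "nop321 \<pi> \<longleftrightarrow> \<not>(\<exists>a b c. subseq [a,b,c] \<pi> \<and> b < a \<and> c < b)"

definition cyc :: "nat \<Rightarrow> nat list \<Rightarrow> bool" where
  "cyc m \<pi> \<longleftrightarrow> (\<forall>i\<in>{1..m}. \<exists>k. (perm_fun \<pi> ^^ k) 1 = i)"

definition Good :: "nat \<Rightarrow> nat list \<Rightarrow> bool" where
  "Good m \<pi> \<longleftrightarrow> \<pi> \<in> perms m \<and> cyc m \<pi> \<and> nop321 \<pi> \<and> last \<pi> \<noteq> m"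

definition hmap :: "nat \<Rightarrow> nat \<Rightarrow> nat" where
  "hmap m x = (if x = m then Suc m else x)"

definition hA :: "nat \<Rightarrow> nat list \<Rightarrow> nat list" where
  "hA m \<pi> = map (hmap m) \<pi> @ [m]"

definition hB :: "nat \<Rightarrow> nat list \<Rightarrow> nat list" where
  "hB m \<pi> = butlast \<pi> @ [Suc m, last \<pi>]"

lemma nop321D: "nop321 xs \<Longrightarrow> subseq [a,b,c] xs \<Longrightarrow> b < a \<Longrightarrow> c < b \<Longrightarrow> False"
  unfolding nop321_def by blast

lemma split3: "[a,b,c] = l1 @ l2 \<Longrightarrow>
  (l1 = [] \<and> l2 = [a,b,c]) \<or> (l1 = [a] \<and> l2 = [b,c]) \<or> (l1 = [a,b] \<and> l2 = [c]) \<or> (l1 = [a,b,c] \<and> l2 = [])"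
  by (cases l1; cases "tl l1"; cases "tl (tl l1)"; auto)

lemma hmap_inj: "inj_on (hmap m) {1..m}"
  unfolding inj_on_def hmap_def by auto

lemma hmap_less: "x \<in> {1..m} \<Longrightarrow> y \<in> {1..m} \<Longrightarrow> hmap m x < hmap m y \<Longrightarrow> x < y"
  unfolding hmap_def by (auto split: if_splits)

lemma hmap_le: "x \<in> {1..m} \<Longrightarrow> hmap m x \<le> Suc m"
  unfolding hmap_def by auto

lemma goodA:
  assumes m: "m \<ge> 1" and G: "Good m \<pi>"
  shows "Good (Suc m) (hA m \<pi>)"
proof -
  have P: "\<pi> \<in> perms m" and C: "cyc m \<pi>" and N: "nop321 \<pi>" using G unfolding Good_def by auto
  have S: "set \<pi> = {1..m}" using perms_set[OF P] .
  have D: "distinct \<pi>" using perms_distinct[OF P] .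
  have L: "length \<pi> = m" using perms_length[OF P] .
  let ?h = "hmap m"
  have "set (hA m \<pi>) = ?h ` {1..m} \<union> {m}" unfolding hA_def using S by simp
  also have "\<dots> = {1..Suc m}"
  proof
    show "?h ` {1..m} \<union> {m} \<subseteq> {1..Suc m}" using m unfolding hmap_def by auto
  next
    show "{1..Suc m} \<subseteq> ?h ` {1..m} \<union> {m}"
    proof
      fix x assume x: "x \<in> {1..Suc m}"
      show "x \<in> ?h ` {1..m} \<union> {m}"
      proof (cases "x = Suc m")
        case True
        then have "x = ?h m" unfolding hmap_def by simp
        then show ?thesis using m by auto
      next
        case False
        show ?thesis
        proof (cases "x = m")
          case True then show ?thesis by simp
        next
          case False2: False
          then have "x = ?h x" unfolding hmap_def by simp
          moreover have "x \<in> {1..m}" using x False by auto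
          ultimately show ?thesis by blast
        qed
      qed
    qed
  qed
  finally have setA: "set (hA m \<pi>) = {1..Suc m}" .
  have dmap: "distinct (map ?h \<pi>)" using D hmap_inj S by (simp add: distinct_map)
  have mnot: "m \<notin> set (map ?h \<pi>)" unfolding hmap_def by auto
  have distA: "distinct (hA m \<pi>)" unfolding hA_def using dmap mnot by simp
  have PA: "hA m \<pi> \<in> perms (Suc m)" unfolding perms_def permutations_of_set_def using setA distA by simp
  define f where "f = perm_fun \<pi>"
  define g where "g = perm_fun (hA m \<pi>)"
  have gA: "g x = ?h (f x)" if "1 \<le> x" "x \<le> m" for x
  proof -
    have "x - 1 < length (map ?h \<pi>)" using that L by simp
    then have "g x = map ?h \<pi> ! (x - 1)" unfolding g_def perm_fun_def hA_def by (simp add: nth_append)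
    also have "\<dots> = ?h (\<pi> ! (x - 1))" using that L by simp
    finally show ?thesis unfolding f_def perm_fun_def .
  qed
  have gB: "g (Suc m) = m" unfolding g_def perm_fun_def hA_def using L by (simp add: nth_append)
  have fR: "f x \<in> {1..m}" if "1 \<le> x" "x \<le> m" for x
  proof -
    have "\<pi> ! (x - 1) \<in> set \<pi>" using that L by simp
    then show ?thesis unfolding f_def perm_fun_def using S by simp
  qed
  have orb: "\<exists>k'. (g^^k') 1 = (f^^k) 1 \<and> (f^^k) 1 \<in> {1..m}" for k
  proof (induction k)
    case 0 then show ?case using m by (intro exI[of _ 0]) simp
  next
    case (Suc k)
    then obtain k' where k': "(g^^k') 1 = (f^^k) 1" and r: "(f^^k) 1 \<in> {1..m}" by blast
    define x where "x = (f^^k) 1"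
    have x1: "1 \<le> x" "x \<le> m" using r unfolding x_def by auto
    have fx: "f x \<in> {1..m}" using fR[OF x1] .
    have "\<exists>k'. (g^^k') 1 = f x"
    proof (cases "f x = m")
      case True
      have "(g^^Suc (Suc k')) 1 = g (g x)" using k' unfolding x_def by simp
      also have "\<dots> = f x" using gA[OF x1] True gB unfolding hmap_def by simp
      finally show ?thesis by blast
    next
      case False
      have "(g^^Suc k') 1 = g x" using k' unfolding x_def by simp
      also have "\<dots> = f x" using gA[OF x1] False unfolding hmap_def by simp
      finally show ?thesis by blast
    qed
    then show ?case using fx unfolding x_def by simp
  qed
  have CA: "cyc (Suc m) (hA m \<pi>)" unfolding cyc_def
  proof
    fix i assume i: "i \<in> {1..Suc m}"
    show "\<exists>k. (perm_fun (hA m \<pi>) ^^ k) 1 = i"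
    proof (cases "i = Suc m")
      case False
      then have "i \<in> {1..m}" using i by auto
      then obtain k where "(f^^k) 1 = i" using C unfolding cyc_def f_def by blast
      then show ?thesis using orb[of k] unfolding g_def by auto
    next
      case True
      have "m \<in> set \<pi>" using S m by simp
      then obtain j where j: "j < length \<pi>" "\<pi> ! j = m" by (auto simp: in_set_conv_nth)
      have x1: "1 \<le> Suc j" "Suc j \<le> m" using j L by auto
      have fx: "f (Suc j) = m" unfolding f_def perm_fun_def using j by simp
      have "Suc j \<in> {1..m}" using x1 by simp
      then obtain k where "(f^^k) 1 = Suc j" using C unfolding cyc_def f_def by blast
      then obtain k' where k': "(g^^k') 1 = Suc j" using orb[of k] by auto
      have "(g^^Suc k') 1 = g (Suc j)" using k' by simp
      also have "\<dots> = Suc m" using gA[OF x1] fx unfolding hmap_def by simp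
      finally show ?thesis using True unfolding g_def by blast
    qed
  qed
  have NA: "nop321 (hA m \<pi>)" unfolding nop321_def
  proof clarify
    fix a b c assume s: "subseq [a,b,c] (hA m \<pi>)" "b < a" "c < b"
    obtain l1 l2 where l: "[a,b,c] = l1 @ l2" "subseq l1 (map ?h \<pi>)" "subseq l2 [m]"
      using subseq_appendE[OF s(1)[unfolded hA_def]] by blast
    have hle: "y \<le> Suc m" if "y \<in> set (map ?h \<pi>)" for y
      using that S hmap_le by auto
    have "l2 = [] \<or> l2 = [m]" using subseq_single_right[of l2 m] l(3) by blast
    then show False
    proof
      assume l2: "l2 = []"
      then have "l1 = [a,b,c]" using l(1) by simp
      then have "subseq [a,b,c] (map ?h \<pi>)" using l(2) by (simp only:)
      then have "\<exists>zs. subseq zs \<pi> \<and> [a,b,c] = map ?h zs" by (rule subseq_map_inv)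
      then obtain zs where zs: "subseq zs \<pi>" "[a,b,c] = map ?h zs" by (elim exE conjE) (rule that)
      have "length zs = 3" using arg_cong[OF zs(2), of length] by simp
      then obtain a' b' c' where z3: "zs = [a',b',c']" by (auto simp: numeral_3_eq_3 length_Suc_conv)
      then have abc: "zs = [a',b',c']" "a = ?h a'" "b = ?h b'" "c = ?h c'" using zs(2) by simp_all
      have "set zs \<subseteq> {1..m}" using subseq_set[OF zs(1)] S by simp
      then have in1: "a' \<in> {1..m}" "b' \<in> {1..m}" "c' \<in> {1..m}" using abc by auto
      have "b' < a'" using hmap_less[OF in1(2) in1(1)] s(2) abc by simp
      moreover have "c' < b'" using hmap_less[OF in1(3) in1(2)] s(3) abc by simp
      moreover have "subseq [a',b',c'] \<pi>" using zs(1) abc(1) by (simp only:)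
      ultimately show False by (intro nop321D[OF N])
    next
      assume l2: "l2 = [m]"
      then have "l1 = [a,b]" using l(1) by simp
      then have "a \<in> set (map ?h \<pi>)" "b \<in> set (map ?h \<pi>)" using subseq_set[OF l(2)] by auto
      then have "a \<le> Suc m" "b \<le> Suc m" using hle by auto
      moreover have "c = m" using l(1) l2 \<open>l1 = [a,b]\<close> by simp
      ultimately show False using s(2) s(3) by simp
    qed
  qed
  have "last (hA m \<pi>) \<noteq> Suc m" unfolding hA_def by simp
  then show ?thesis using PA CA NA unfolding Good_def by blast
qed

lemma goodB:
  assumes m: "m \<ge> 1" and G: "Good m \<pi>"
  shows "Good (Suc m) (hB m \<pi>)"
proof -
  have P: "\<pi> \<in> perms m" and C: "cyc m \<pi>" and N: "nop321 \<pi>" and La: "last \<pi> \<noteq> m"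
    using G unfolding Good_def by auto
  have S: "set \<pi> = {1..m}" using perms_set[OF P] .
  have D: "distinct \<pi>" using perms_distinct[OF P] .
  have L: "length \<pi> = m" using perms_length[OF P] .
  have ne: "\<pi> \<noteq> []" using L m by auto
  define bp where "bp = butlast \<pi>"
  define l where "l = last \<pi>"
  have pi: "\<pi> = bp @ [l]" unfolding bp_def l_def using ne by simp
  have hb: "hB m \<pi> = bp @ [Suc m, l]" unfolding hB_def bp_def l_def by simp
  have lbp: "length bp = m - 1" unfolding bp_def using L by simp
  have sm: "Suc m \<notin> set \<pi>" using S by auto
  have setB: "set (hB m \<pi>) = {1..Suc m}"
  proof -
    have e1: "set \<pi> = insert l (set bp)" by (subst pi) simp
    have "set (hB m \<pi>) = insert (Suc m) (set \<pi>)" unfolding hb e1 by auto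
    then show ?thesis using S by auto
  qed
  have distB: "distinct (hB m \<pi>)"
  proof -
    have "distinct (bp @ [l])" using D pi by simp
    moreover have "Suc m \<notin> set (bp @ [l])" using sm pi by simp
    ultimately show ?thesis unfolding hb by auto
  qed
  have PB: "hB m \<pi> \<in> perms (Suc m)" unfolding perms_def permutations_of_set_def using setB distB by simp
  define f where "f = perm_fun \<pi>"
  define g where "g = perm_fun (hB m \<pi>)"
  have gA: "g x = f x" if "1 \<le> x" "x < m" for x
  proof -
    have "x - 1 < length bp" using that lbp by simp
    then have "g x = bp ! (x - 1)" unfolding g_def perm_fun_def hb by (simp add: nth_append)
    also have "\<dots> = \<pi> ! (x - 1)" unfolding pi using \<open>x - 1 < length bp\<close> by (simp add: nth_append)
    finally show ?thesis unfolding f_def perm_fun_def .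
  qed
  have gm: "g m = Suc m" unfolding g_def perm_fun_def hb using lbp m by (simp add: nth_append)
  have gSm: "g (Suc m) = f m"
  proof -
    have "\<not> m < length bp" "m - length bp = 1" using lbp m by auto
    then have "g (Suc m) = l" unfolding g_def perm_fun_def hb
      by (simp add: nth_append)
    moreover have "f m = l" unfolding f_def perm_fun_def pi using lbp m by (simp add: nth_append)
    ultimately show ?thesis by simp
  qed
  have fR: "f x \<in> {1..m}" if "1 \<le> x" "x \<le> m" for x
  proof -
    have "\<pi> ! (x - 1) \<in> set \<pi>" using that L by simp
    then show ?thesis unfolding f_def perm_fun_def using S by simp
  qed
  have orb: "\<exists>k'. (g^^k') 1 = (f^^k) 1 \<and> (f^^k) 1 \<in> {1..m}" for k
  proof (induction k)
    case 0 then show ?case using m by (intro exI[of _ 0]) simp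
  next
    case (Suc k)
    then obtain k' where k': "(g^^k') 1 = (f^^k) 1" and r: "(f^^k) 1 \<in> {1..m}" by blast
    define x where "x = (f^^k) 1"
    have x1: "1 \<le> x" "x \<le> m" using r unfolding x_def by auto
    have fx: "f x \<in> {1..m}" using fR[OF x1] .
    have "\<exists>k'. (g^^k') 1 = f x"
    proof (cases "x = m")
      case True
      have "(g^^Suc (Suc k')) 1 = g (g x)" using k' unfolding x_def by simp
      also have "\<dots> = f x" using True gm gSm by simp
      finally show ?thesis by blast
    next
      case False
      have "(g^^Suc k') 1 = g x" using k' unfolding x_def by simp
      also have "\<dots> = f x" using gA x1 False by simp
      finally show ?thesis by blast
    qed
    then show ?case using fx unfolding x_def by simp
  qed
  have CB: "cyc (Suc m) (hB m \<pi>)" unfolding cyc_def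
  proof
    fix i assume i: "i \<in> {1..Suc m}"
    show "\<exists>k. (perm_fun (hB m \<pi>) ^^ k) 1 = i"
    proof (cases "i = Suc m")
      case False
      then have "i \<in> {1..m}" using i by auto
      then obtain k where "(f^^k) 1 = i" using C unfolding cyc_def f_def by blast
      then show ?thesis using orb[of k] unfolding g_def by auto
    next
      case True
      have "m \<in> {1..m}" using m by simp
      then obtain k where "(f^^k) 1 = m" using C unfolding cyc_def f_def by blast
      then obtain k' where k': "(g^^k') 1 = m" using orb[of k] by auto
      have "(g^^Suc k') 1 = g m" using k' by simp
      also have "\<dots> = Suc m" using gm .
      finally show ?thesis using True unfolding g_def by blast
    qed
  qed
  have bpS: "y \<le> m" if "y \<in> set bp" for y
    using that S pi by auto
  have NB: "nop321 (hB m \<pi>)" unfolding nop321_def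
  proof clarify
    fix a b c assume s: "subseq [a,b,c] (hB m \<pi>)" "b < a" "c < b"
    obtain l1 l2 where l: "[a,b,c] = l1 @ l2" "subseq l1 bp" "subseq l2 [Suc m, l]"
      using subseq_appendE[OF s(1)[unfolded hb]] by blast
    from split3[OF l(1)] show False
    proof (elim disjE conjE)
      assume "l1 = []" "l2 = [a,b,c]"
      then have "subseq [a,b,c] [Suc m, l]" using l(3) by (simp only:)
      then show False using not_subseq_length[of "[Suc m, l]" "[a,b,c]"] by simp
    next
      assume e: "l1 = [a]" "l2 = [b,c]"
      then have "subseq [b,c] [Suc m, l]" using l(3) by (simp only:)
      then have "[b,c] = [Suc m, l]" by (rule subseq_same_length) simp
      then have "b = Suc m" by simp
      moreover have "a \<in> set bp" using subseq_set[OF l(2)] e by simp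
      ultimately show False using bpS s(2) by fastforce
    next
      assume e: "l1 = [a,b]" "l2 = [c]"
      then have "subseq [c] [Suc m, l]" using l(3) by (simp only:)
      then have "c \<in> set [Suc m, l]" by (simp only: subseq_singleton_left)
      then have "c = Suc m \<or> c = l" by simp
      then show False
      proof
        assume "c = Suc m"
        moreover have "b \<in> set bp" using subseq_set[OF l(2)] e by simp
        ultimately show False using bpS s(3) by fastforce
      next
        assume cl: "c = l"
        have "subseq [a,b] bp" using l(2) e by (simp only:)
        then have "subseq ([a,b] @ [l]) (bp @ [l])" by (rule list_emb_append_mono) simp
        then have "subseq [a,b,c] \<pi>" using cl pi by simp
        then show False using s(2) s(3) by (intro nop321D[OF N])
      qed
    next
      assume e: "l1 = [a,b,c]" "l2 = []"
      then have "subseq [a,b,c] bp" using l(2) by (simp only:)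
      then have "subseq [a,b,c] \<pi>" unfolding pi by (rule subseq_rev_drop_many)
      then show False using s(2) s(3) by (intro nop321D[OF N])
    qed
  qed
  have "l \<in> set \<pi>" unfolding l_def using ne by simp
  then have "l \<le> m" using S by simp
  then have "last (hB m \<pi>) \<noteq> Suc m" unfolding hb by simp
  then show ?thesis using PB CB NB unfolding Good_def by blast
qed

fun fam :: "nat \<Rightarrow> nat list set" where
  "fam 0 = {[2,1]}"
| "fam (Suc k) = hA (k+2) ` fam k \<union> hB (k+2) ` fam k"

lemma good_base: "Good 2 [2,1]"
proof -
  have "set [2,1::nat] = {1..2}" by auto
  then have "[2,1] \<in> perms 2" unfolding perms_def permutations_of_set_def by simp
  moreover have "cyc 2 [2,1]" unfolding cyc_def
  proof
    fix i :: nat assume "i \<in> {1..2}"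
    then have "i = 1 \<or> i = 2" by auto
    then show "\<exists>k. (perm_fun [2,1] ^^ k) 1 = i"
    proof
      assume "i = 1" then show ?thesis by (intro exI[of _ 0]) simp
    next
      assume "i = 2" then show ?thesis by (intro exI[of _ 1]) (simp add: perm_fun_def)
    qed
  qed
  moreover have "nop321 [2,1]" unfolding nop321_def
    using not_subseq_length[of "[2,1::nat]"] by auto
  ultimately show ?thesis unfolding Good_def by simp
qed

lemma fam_good: "\<pi> \<in> fam k \<Longrightarrow> Good (k+2) \<pi>"
proof (induction k arbitrary: \<pi>)
  case 0 then show ?case using good_base by (simp add: numeral_2_eq_2)
next
  case (Suc k)
  then show ?case using goodA[of "k+2"] goodB[of "k+2"] by auto
qed

lemma inj_hA: "inj_on (hA m) {\<pi>. Good m \<pi>}"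
proof (rule inj_onI)
  fix x y assume x: "x \<in> {\<pi>. Good m \<pi>}" and y: "y \<in> {\<pi>. Good m \<pi>}" and e: "hA m x = hA m y"
  have "map (hmap m) x = map (hmap m) y" using e unfolding hA_def by simp
  moreover have "set x \<union> set y \<subseteq> {1..m}" using x y perms_set unfolding Good_def by auto
  then have "inj_on (hmap m) (set x \<union> set y)" using hmap_inj inj_on_subset by blast
  ultimately show "x = y" using inj_on_map_eq_map by blast
qed

lemma inj_hB: "m \<ge> 1 \<Longrightarrow> inj_on (hB m) {\<pi>. Good m \<pi>}"
proof (rule inj_onI)
  fix x y assume m: "m \<ge> 1" and x: "x \<in> {\<pi>. Good m \<pi>}" and y: "y \<in> {\<pi>. Good m \<pi>}" and e: "hB m x = hB m y"
  have "x \<noteq> []" "y \<noteq> []" using x y m perms_length unfolding Good_def by fastforce+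
  moreover have "butlast (butlast (hB m x)) = butlast x" "last (hB m x) = last x"
    "butlast (butlast (hB m y)) = butlast y" "last (hB m y) = last y" unfolding hB_def by (simp_all add: butlast_append)
  ultimately show "x = y" using e by (metis append_butlast_last_id)
qed

lemma fam_card: "finite (fam k) \<and> card (fam k) = 2 ^ k"
proof (induction k)
  case 0 then show ?case by simp
next
  case (Suc k)
  let ?m = "k + 2"
  have sub: "fam k \<subseteq> {\<pi>. Good ?m \<pi>}" using fam_good by auto
  have iA: "inj_on (hA ?m) (fam k)" using inj_on_subset[OF inj_hA sub] .
  have iB: "inj_on (hB ?m) (fam k)" using inj_on_subset[OF inj_hB sub] by simp
  have disj: "hA ?m ` fam k \<inter> hB ?m ` fam k = {}"
  proof (rule ccontr)
    assume "\<not> ?thesis"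
    then obtain x y where xy: "x \<in> fam k" "y \<in> fam k" "hA ?m x = hB ?m y" by auto
    have "last (hA ?m x) = ?m" unfolding hA_def by simp
    moreover have "last (hB ?m y) = last y" unfolding hB_def by simp
    moreover have "last y \<noteq> ?m" using fam_good[OF xy(2)] unfolding Good_def by simp
    ultimately show False using xy(3) by simp
  qed
  have fin: "finite (fam k)" using Suc by simp
  have "card (fam (Suc k)) = card (hA ?m ` fam k) + card (hB ?m ` fam k)"
    using card_Un_disjoint[OF finite_imageI[OF fin] finite_imageI[OF fin] disj] by simp
  also have "\<dots> = 2 * card (fam k)" using card_image[OF iA] card_image[OF iB] by simp
  finally show ?case using Suc fin by simp
qed

theorem mainTheorem6:
  fixes n :: nat
  assumes "n \<ge> 2"
  shows "card {\<pi> \<in> cyclic_perms n. avoids \<pi> [3,2,1]}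
           \<ge> card {\<pi> \<in> perms (n - 1). avoids \<pi> [1,3,2] \<and> avoids \<pi> [2,3,1]}
         \<and> card {\<pi> \<in> perms (n - 1). avoids \<pi> [1,3,2] \<and> avoids \<pi> [2,3,1]} = 2 ^ (n - 2)"
proof -
  have n1: "n - 1 = Suc (n - 2)" using assms by simp
  have "{\<pi> \<in> perms (n - 1). avoids \<pi> [1,3,2] \<and> avoids \<pi> [2,3,1]} = Sav (n - 1)"
    unfolding Sav_def using Sav_peak perms_distinct by blast
  then have c2: "card {\<pi> \<in> perms (n - 1). avoids \<pi> [1,3,2] \<and> avoids \<pi> [2,3,1]} = 2 ^ (n - 2)"
    using card_Sav[of "n - 2"] n1 by simp
  have nn: "n - 2 + 2 = n" using assms by simp
  have sub: "fam (n - 2) \<subseteq> {\<pi> \<in> cyclic_perms n. avoids \<pi> [3,2,1]}"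
  proof
    fix \<pi> assume "\<pi> \<in> fam (n - 2)"
    then have "Good n \<pi>" using fam_good[of \<pi> "n - 2"] nn by simp
    then show "\<pi> \<in> {\<pi> \<in> cyclic_perms n. avoids \<pi> [3,2,1]}"
      unfolding Good_def cyclic_perms_def cyc_def avoids_def c321 nop321_def by blast
  qed
  have fin: "finite {\<pi> \<in> cyclic_perms n. avoids \<pi> [3,2,1]}"
    unfolding cyclic_perms_def perms_def by simp
  have "2 ^ (n - 2) \<le> card {\<pi> \<in> cyclic_perms n. avoids \<pi> [3,2,1]}"
    using card_mono[OF fin sub] fam_card[of "n - 2"] by simp
  then show ?thesis using c2 by simp
qed

end
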